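(* Let $k$ be a field of characteristic $p>0$, $m\ge1$, and let $G=\ker(F:W_m\to W_m)$, the finite group scheme with Hopf algebra $R=k[x_0,\dots,x_{m-1}]/(x_0^p,\dots,x_{m-1}^p)$ (comultiplication given by Witt vector addition). Let $M$ be a finite-dimensional $R$-comodule with comodule map $c_M$ and $v\in M\setminus\{0\}$. Write $c_M(v)=\sum_{\underline i\in\{0,\dots,p-1\}^m}v_{\underline i}\otimes\underline x^{\underline i}$, where $\underline x^{\underline i}=\prod_{\nu=0}^{m-1}x_\nu^{i_\nu}$. Order $\{0,\dots,p-1\}^m$ by $\underline i\succeq\underline i'$ iff $\sum_\nu i_\nu p^\nu\ge\sum_\nu i'_\nu p^\nu$. If $\underline j$ is maximal among the $\underline i$ with $v_{\underline i}\ne0$, then $v_{\underline j}\in M^G$.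
   Context: $W_m$ is the group scheme of truncated Witt vectors of length $m$ over $k$, $F$ the relative Frobenius $(a_0,\dots,a_{m-1})\mapsto(a_0^p,\dots,a_{m-1}^p)$. An $R$-comodule is a $k$-vector space $M$ with a $k$-linear map $c_M:M\to M\otimes_kR$ satisfying coassociativity $(\mathrm{id}\otimes c)\circ c_M=(c_M\otimes\mathrm{id})\circ c_M$ and the counit axiom $(\mathrm{id}\otimes u)\circ c_M=\mathrm{id}$; equivalently a representation of $G$ on $M$. $M^G=\{w\in M:c_M(w)=w\otimes1\}$. *)

theory Defs
  imports Complex_Main "HOL-Library.Poly_Mapping"
begin

section \<open>Polynomials in the variables X_0, X_1, ... (Inl) and Y_0, Y_1, ... (Inr)\<close>

type_synonym 'a wpoly = "((nat + nat) \<Rightarrow>\<^sub>0 nat) \<Rightarrow>\<^sub>0 'a"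

definition wvar :: "nat + nat \<Rightarrow> 'a::comm_ring_1 wpoly" where
  "wvar v = Poly_Mapping.single (Poly_Mapping.single v 1) 1"

definition wconst :: "'a::comm_ring_1 \<Rightarrow> 'a wpoly" where
  "wconst c = Poly_Mapping.single 0 c"

definition ghost_XY :: "nat \<Rightarrow> nat \<Rightarrow> rat wpoly" where
  "ghost_XY p n = (\<Sum>i\<le>n. wconst (of_nat p ^ i) *
      (wvar (Inl i) ^ (p ^ (n - i)) + wvar (Inr i) ^ (p ^ (n - i))))"

text \<open>List [S_0, ..., S_{n-1}] of the Witt vector addition polynomials (over Q),
  determined by  sum_{i<=n} p^i S_i^(p^(n-i)) = w_n(X) + w_n(Y).\<close>
primrec witt_add_list :: "nat \<Rightarrow> nat \<Rightarrow> rat wpoly list" where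
  "witt_add_list p 0 = []"
| "witt_add_list p (Suc n) =
     (let L = witt_add_list p n in
      L @ [wconst (1 / of_nat p ^ n) *
           (ghost_XY p n - (\<Sum>i<n. wconst (of_nat p ^ i) * (L ! i) ^ (p ^ (n - i))))])"

definition witt_add :: "nat \<Rightarrow> nat \<Rightarrow> rat wpoly" where
  "witt_add p n = witt_add_list p (Suc n) ! n"

text \<open>The Witt addition polynomials have integer coefficients; their image in k[X,Y].\<close>
definition witt_add_k :: "nat \<Rightarrow> nat \<Rightarrow> 'k::field wpoly" where
  "witt_add_k p n = Poly_Mapping.map (\<lambda>q. of_int \<lfloor>q\<rfloor>) (witt_add p n)"

definition witt_idx :: "nat \<Rightarrow> nat \<Rightarrow> (nat \<Rightarrow> nat) set" where
  "witt_idx p m = {i. (\<forall>\<nu><m. i \<nu> < p) \<and> (\<forall>\<nu>\<ge>m. i \<nu> = 0)}"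

text \<open>Exponent of the monomial x^a (tensor) x^b in R (tensor) R, i.e. X^a Y^b.\<close>
definition tensor_exp :: "nat \<Rightarrow> (nat \<Rightarrow> nat) \<Rightarrow> (nat \<Rightarrow> nat) \<Rightarrow> (nat + nat) \<Rightarrow>\<^sub>0 nat" where
  "tensor_exp m a b = (\<Sum>\<nu><m. Poly_Mapping.single (Inl \<nu>) (a \<nu>) + Poly_Mapping.single (Inr \<nu>) (b \<nu>))"

text \<open>Structure constants of the comultiplication:
  Delta(x^i) = prod_nu S_nu(x (tensor) 1, 1 (tensor) x)^(i_nu) = sum_{a,b} comult_coeff i a b x^a (tensor) x^b
  in R (tensor) R = k[X,Y]/(X_nu^p, Y_nu^p).  Since the ideal is monomial, for a, b in the box
  the coefficient can be read off in k[X,Y].\<close>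
definition comult_coeff :: "nat \<Rightarrow> nat \<Rightarrow> (nat \<Rightarrow> nat) \<Rightarrow> (nat \<Rightarrow> nat) \<Rightarrow> (nat \<Rightarrow> nat) \<Rightarrow> 'k::field" where
  "comult_coeff p m i a b =
     Poly_Mapping.lookup (\<Prod>\<nu><m. (witt_add_k p \<nu> :: 'k wpoly) ^ (i \<nu>)) (tensor_exp m a b)"

text \<open>Since R has the basis of monomials x^i (i in witt_idx p m), an element of M (tensor) R is written
  uniquely as sum_i w_i (tensor) x^i; we represent it by the family i |-> w_i (zero outside the index set).
  So c_M(w) = sum_i cM w i (tensor) x^i.
  Counit u(x^i) = [i = 0] (unit of W_m is the zero vector).
  Coassociativity (id (tensor) Delta) o c_M = (c_M (tensor) id) o c_M, compared on the basis
  x^a (tensor) x^b of R (tensor) R.\<close>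
definition witt_kerF_comodule ::
  "nat \<Rightarrow> nat \<Rightarrow> ('k::field \<Rightarrow> 'm::ab_group_add \<Rightarrow> 'm) \<Rightarrow> ('m \<Rightarrow> (nat \<Rightarrow> nat) \<Rightarrow> 'm) \<Rightarrow> bool" where
  "witt_kerF_comodule p m scale cM \<longleftrightarrow>
     (\<forall>i. Vector_Spaces.linear scale scale (\<lambda>w. cM w i)) \<and>
     (\<forall>w i. i \<notin> witt_idx p m \<longrightarrow> cM w i = 0) \<and>
     (\<forall>w. cM w (\<lambda>_. 0) = w) \<and>
     (\<forall>w. \<forall>a\<in>witt_idx p m. \<forall>b\<in>witt_idx p m.
        cM (cM w b) a = (\<Sum>i\<in>witt_idx p m. scale (comult_coeff p m i a b) (cM w i)))"

definition comod_invariants :: "('m::zero \<Rightarrow> (nat \<Rightarrow> nat) \<Rightarrow> 'm) \<Rightarrow> 'm set" where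
  "comod_invariants cM = {w. cM w = (\<lambda>i. if i = (\<lambda>_. 0) then w else 0)}"

definition idx_val :: "nat \<Rightarrow> nat \<Rightarrow> (nat \<Rightarrow> nat) \<Rightarrow> nat" where
  "idx_val p m i = (\<Sum>\<nu><m. i \<nu> * p ^ \<nu>)"

end

theory Submission
  imports Defs
begin

definition vw :: "nat \<Rightarrow> nat + nat \<Rightarrow> nat" where
  "vw p v = (case v of Inl n \<Rightarrow> p ^ n | Inr n \<Rightarrow> p ^ n)"

definition wt :: "nat \<Rightarrow> ((nat + nat) \<Rightarrow>\<^sub>0 nat) \<Rightarrow> nat" where
  "wt p e = (\<Sum>v\<in>Poly_Mapping.keys e. Poly_Mapping.lookup e v * vw p v)"

lemma wt_zero [simp]: "wt p 0 = 0"
  by (simp add: wt_def)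

lemma wt_add [simp]: "wt p (e1 + e2) = wt p e1 + wt p e2"
  unfolding wt_def
  by (rule setsum_keys_plus_distrib) (auto simp: algebra_simps)

lemma wt_single [simp]: "wt p (Poly_Mapping.single v k) = k * vw p v"
  by (simp add: wt_def)

lemma wt_sum: "wt p (\<Sum>x\<in>A. f x) = (\<Sum>x\<in>A. wt p (f x))"
  by (induction A rule: infinite_finite_induct) auto

definition homog :: "nat \<Rightarrow> nat \<Rightarrow> 'a::comm_ring_1 wpoly \<Rightarrow> bool" where
  "homog p w f \<longleftrightarrow> (\<forall>e\<in>Poly_Mapping.keys f. wt p e = w)"

lemma homog_0 [simp]: "homog p w 0"
  by (simp add: homog_def)

lemma homog_add: "homog p w f \<Longrightarrow> homog p w g \<Longrightarrow> homog p w (f + g)"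
  unfolding homog_def using keys_add[of f g] by blast

lemma homog_diff: "homog p w f \<Longrightarrow> homog p w g \<Longrightarrow> homog p w (f - g)"
  unfolding homog_def using keys_diff[of f g] by blast

lemma homog_mult: "homog p w1 f \<Longrightarrow> homog p w2 g \<Longrightarrow> homog p (w1 + w2) (f * g)"
  unfolding homog_def
proof
  fix e assume H1: "\<forall>e\<in>Poly_Mapping.keys f. wt p e = w1" and H2: "\<forall>e\<in>Poly_Mapping.keys g. wt p e = w2"
    and e: "e \<in> Poly_Mapping.keys (f * g)"
  obtain a b where "e = a + b" "a \<in> Poly_Mapping.keys f" "b \<in> Poly_Mapping.keys g"
    using keys_mult[of f g] e by blast
  then show "wt p e = w1 + w2" using H1 H2 by simp
qed

lemma homog_one: "homog p 0 (1 :: 'a::comm_ring_1 wpoly)"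
  by (simp add: homog_def)

lemma homog_pow: "homog p w f \<Longrightarrow> homog p (w * n) (f ^ n)"
proof (induction n)
  case 0 then show ?case by (simp add: homog_one)
next
  case (Suc n)
  then have "homog p (w + w * n) (f * f ^ n)" using homog_mult by blast
  then show ?case by simp
qed

lemma homog_sum: "(\<And>x. x \<in> A \<Longrightarrow> homog p w (f x)) \<Longrightarrow> homog p w (\<Sum>x\<in>A. f x)"
  by (induction A rule: infinite_finite_induct) (auto intro: homog_add)

lemma homog_prod: "(\<And>x. x \<in> A \<Longrightarrow> homog p (g x) (f x)) \<Longrightarrow> homog p (\<Sum>x\<in>A. g x) (\<Prod>x\<in>A. f x)"
  by (induction A rule: infinite_finite_induct) (auto intro: homog_mult simp: homog_one)

lemma homog_wconst: "homog p 0 (wconst c)"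
  by (simp add: homog_def wconst_def)

lemma homog_wvar: "homog p (vw p v) (wvar v)"
  by (simp add: homog_def wvar_def)

lemma homog_ghost: "homog p (p ^ n) (ghost_XY p n)"
  unfolding ghost_XY_def
proof (rule homog_sum)
  fix i assume i: "i \<in> {..n}"
  have e: "p ^ i * p ^ (n - i) = p ^ n" using i by (simp add: power_add[symmetric])
  have "homog p (vw p (Inl i) * p ^ (n - i)) (wvar (Inl i) ^ (p ^ (n - i)) :: rat wpoly)"
    by (rule homog_pow[OF homog_wvar])
  moreover have "homog p (vw p (Inr i) * p ^ (n - i)) (wvar (Inr i) ^ (p ^ (n - i)) :: rat wpoly)"
    by (rule homog_pow[OF homog_wvar])
  ultimately have "homog p (p ^ n) (wvar (Inl i) ^ (p ^ (n - i)) + wvar (Inr i) ^ (p ^ (n - i)) :: rat wpoly)"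
    using e by (auto simp: vw_def intro: homog_add)
  then have "homog p (0 + p ^ n) (wconst (of_nat p ^ i) * (wvar (Inl i) ^ (p ^ (n - i)) + wvar (Inr i) ^ (p ^ (n - i))) :: rat wpoly)"
    by (intro homog_mult homog_wconst)
  then show "homog p (p ^ n) (wconst (of_nat p ^ i) * (wvar (Inl i) ^ (p ^ (n - i)) + wvar (Inr i) ^ (p ^ (n - i))) :: rat wpoly)"
    by simp
qed

lemma witt_add_list_homog:
  "length (witt_add_list p n) = n \<and> (\<forall>i<n. homog p (p ^ i) (witt_add_list p n ! i))"
proof (induction n)
  case 0 then show ?case by simp
next
  case (Suc n)
  define L where "L = witt_add_list p n"
  have len: "length L = n" and H: "\<forall>i<n. homog p (p ^ i) (L ! i)" using Suc L_def by auto
  have S: "homog p (p ^ n) (\<Sum>i<n. wconst (of_nat p ^ i) * (L ! i) ^ (p ^ (n - i)))"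
  proof (rule homog_sum)
    fix i assume i: "i \<in> {..<n}"
    have e: "p ^ i * p ^ (n - i) = p ^ n" using i by (simp add: power_add[symmetric])
    have "homog p (0 + p ^ i * p ^ (n - i)) (wconst (of_nat p ^ i) * (L ! i) ^ (p ^ (n - i)))"
      using H i by (intro homog_mult homog_wconst homog_pow) auto
    then show "homog p (p ^ n) (wconst (of_nat p ^ i) * (L ! i) ^ (p ^ (n - i)))" using e by simp
  qed
  have N: "homog p (0 + p ^ n) (wconst (1 / of_nat p ^ n) *
           (ghost_XY p n - (\<Sum>i<n. wconst (of_nat p ^ i) * (L ! i) ^ (p ^ (n - i)))))"
    by (intro homog_mult homog_wconst homog_diff homog_ghost S)
  show ?case
    using len H N by (auto simp: L_def[symmetric] Let_def nth_append less_Suc_eq)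
qed

lemma homog_witt_add_k: "homog p (p ^ n) (witt_add_k p n :: 'k::field wpoly)"
proof -
  have "homog p (p ^ n) (witt_add_list p (Suc n) ! n)"
    using witt_add_list_homog[of p "Suc n"] by blast
  then have "homog p (p ^ n) (witt_add p n)"
    unfolding witt_add_def .
  moreover have "Poly_Mapping.keys (Poly_Mapping.map f q) \<subseteq> Poly_Mapping.keys q"
    for f :: "rat \<Rightarrow> 'k" and q :: "rat wpoly"
    by (auto simp: in_keys_iff Poly_Mapping.map.rep_eq when_def)
  ultimately show ?thesis unfolding homog_def witt_add_k_def by blast
qed

lemma wt_tensor_exp: "wt p (tensor_exp m a b) = idx_val p m a + idx_val p m b"
  by (simp add: tensor_exp_def wt_sum idx_val_def vw_def sum.distrib)

lemma comult_coeff_zero: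
  assumes "comult_coeff p m i a b \<noteq> (0::'k::field)"
  shows "idx_val p m a + idx_val p m b = idx_val p m i"
proof -
  have "homog p (\<Sum>\<nu><m. p ^ \<nu> * i \<nu>) (\<Prod>\<nu><m. (witt_add_k p \<nu> :: 'k wpoly) ^ (i \<nu>))"
    by (intro homog_prod homog_pow homog_witt_add_k)
  moreover have "tensor_exp m a b \<in> Poly_Mapping.keys (\<Prod>\<nu><m. (witt_add_k p \<nu> :: 'k wpoly) ^ (i \<nu>))"
    using assms by (simp add: comult_coeff_def in_keys_iff)
  ultimately have "wt p (tensor_exp m a b) = (\<Sum>\<nu><m. p ^ \<nu> * i \<nu>)"
    unfolding homog_def by blast
  moreover have "(\<Sum>\<nu><m. p ^ \<nu> * i \<nu>) = idx_val p m i"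
    unfolding idx_val_def by (simp add: mult.commute)
  ultimately show ?thesis by (simp add: wt_tensor_exp)
qed

theorem corollary3p10:
  fixes scale :: "'k::field \<Rightarrow> 'm::ab_group_add \<Rightarrow> 'm"
    and Basis :: "'m set"
    and cM :: "'m \<Rightarrow> (nat \<Rightarrow> nat) \<Rightarrow> 'm"
    and p m :: nat and v :: 'm and j :: "nat \<Rightarrow> nat"
  assumes "CHAR('k) = p" and "p > 0"
    and "m \<ge> 1"
    and "finite_dimensional_vector_space scale Basis"
    and "witt_kerF_comodule p m scale cM"
    and "v \<noteq> 0"
    and "j \<in> witt_idx p m" and "cM v j \<noteq> 0"
    and "\<forall>i\<in>witt_idx p m. cM v i \<noteq> 0 \<longrightarrow> \<not> (idx_val p m j < idx_val p m i)"
  shows "cM v j \<in> comod_invariants cM"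
proof -
  interpret vector_space scale
    using assms(4) by (rule finite_dimensional_vector_space.axioms(1))
  have zero_out: "\<And>w i. i \<notin> witt_idx p m \<Longrightarrow> cM w i = 0"
    and counit: "\<And>w. cM w (\<lambda>_. 0) = w"
    and coassoc: "\<And>w a b. a \<in> witt_idx p m \<Longrightarrow> b \<in> witt_idx p m \<Longrightarrow>
        cM (cM w b) a = (\<Sum>i\<in>witt_idx p m. scale (comult_coeff p m i a b) (cM w i))"
    using assms(5) unfolding witt_kerF_comodule_def by simp_all
  have "cM (cM v j) a = (if a = (\<lambda>_. 0) then cM v j else 0)" for a
  proof (cases "a = (\<lambda>_. 0)")
    case True then show ?thesis using counit by simp
  next
    case a0: False
    show ?thesis
    proof (cases "a \<in> witt_idx p m")
      case False then show ?thesis using zero_out a0 by simp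
    next
      case aI: True
      have "scale (comult_coeff p m i a j) (cM v i) = 0" if iI: "i \<in> witt_idx p m" for i
      proof (cases "cM v i = 0")
        case True then show ?thesis by simp
      next
        case False
        have le: "idx_val p m i \<le> idx_val p m j" using assms(9) iI False by auto
        have "comult_coeff p m i a j = (0::'k)"
        proof (rule ccontr)
          assume "comult_coeff p m i a j \<noteq> (0::'k)"
          then have "idx_val p m a + idx_val p m j = idx_val p m i" by (rule comult_coeff_zero)
          then have "idx_val p m a = 0" using le by simp
          then have "\<forall>\<nu><m. a \<nu> = 0" using assms(2) by (simp add: idx_val_def)
          moreover have "\<forall>\<nu>\<ge>m. a \<nu> = 0" using aI by (simp add: witt_idx_def)
          ultimately have "a = (\<lambda>_. 0)"
          proof (intro ext)
            fix \<nu> assume A: "\<forall>\<nu><m. a \<nu> = 0" and B: "\<forall>\<nu>\<ge>m. a \<nu> = 0"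
            show "a \<nu> = 0" using A B by (cases "\<nu> < m") auto
          qed
          with a0 show False by simp
        qed
        then show ?thesis by simp
      qed
      then have "(\<Sum>i\<in>witt_idx p m. scale (comult_coeff p m i a j) (cM v i)) = 0"
        by (intro sum.neutral) blast
      then show ?thesis using coassoc[OF aI assms(7)] a0 by simp
    qed
  qed
  then have "cM (cM v j) = (\<lambda>a. if a = (\<lambda>_. 0) then cM v j else 0)" by (rule ext)
  then show ?thesis unfolding comod_invariants_def by (rule CollectI)
qed

end
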